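(* Let $L_1,L_2$ be disjoint first-order languages without function symbols, and let $\mathcal M_k$ be an $L_k$-structure for $k=1,2$. Then the standard simple product of $\mathcal M_1$ and $\mathcal M_2$ is a simple product of $\mathcal M_1$ and $\mathcal M_2$.
   Context: Let $M_k$ be the universe of $\mathcal M_k$ and $\pi_k:M_1\times M_2\to M_k$ the projections. For $A\subseteq M_1^n$ and $B\subseteq M_2^n$ put $A*B=\{((a_1,b_1),\ldots,(a_n,b_n))\in(M_1\times M_2)^n:(a_1,\ldots,a_n)\in A,(b_1,\ldots,b_n)\in B\}$. A structure $\mathcal N$ (in any language) is a simple product of $\mathcal M_1$ and $\mathcal M_2$ if its universe is $M_1\times M_2$ and every $\mathcal N$-definable (with parameters) subset of $(M_1\times M_2)^n$ is a Boolean combination of finitely many sets of the form $A*M_2^n$ with $A$ an $\mathcal M_1$-definable subset of $M_1^n$ and $M_1^n*B$ with $B$ an $\mathcal M_2$-definable subset of $M_2^n$. The language $L_{\mathrm{sim}}$ has constant symbols $C_{(c_1,c_2)}$ for each pair of constants $c_1\in L_1$, $c_2\in L_2$, the predicate symbols of $L_1$ and of $L_2$, and two binary predicates $\sim_1,\sim_2$. The standard simple product of $\mathcal M_1,\mathcal M_2$ is the $L_{\mathrm{sim}}$-structure with universe $M_1\times M_2$, where $C_{(c_1,c_2)}$ is interpreted as $(c_1^{\mathcal M_1},c_2^{\mathcal M_2})$, $x\sim_k y$ iff $\pi_k(x)=\pi_k(y)$, and for an $n$-ary predicate $R\in L_k$, $R(\bar c)$ holds iff $\mathcal M_k\models R(\pi_k(\bar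 c))$ ($\pi_k$ applied coordinatewise). *)

theory Defs
  imports Main
begin

record ('c, 'r) lang =
  lconsts :: "'c set"
  lrels :: "'r set"
  larity :: "'r \<Rightarrow> nat"

record ('a, 'c, 'r) struc =
  univ :: "'a set"
  cint :: "'c \<Rightarrow> 'a"
  rint :: "'r \<Rightarrow> 'a list \<Rightarrow> bool"

definition is_structure :: "('c, 'r) lang \<Rightarrow> ('a, 'c, 'r) struc \<Rightarrow> bool" where
  "is_structure L M \<longleftrightarrow> univ M \<noteq> {}
     \<and> (\<forall>c \<in> lconsts L. cint M c \<in> univ M)
     \<and> (\<forall>r \<in> lrels L. \<forall>xs. rint M r xs \<longrightarrow> length xs = larity L r \<and> set xs \<subseteq> univ M)"

datatype 'c trm = Var nat | Cst 'c

datatype ('c, 'r) fm =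
    Eq "'c trm" "'c trm"
  | Rel 'r "'c trm list"
  | Neg "('c, 'r) fm"
  | Conj "('c, 'r) fm" "('c, 'r) fm"
  | Ex nat "('c, 'r) fm"

fun wf_trm :: "('c, 'r) lang \<Rightarrow> 'c trm \<Rightarrow> bool" where
  "wf_trm L (Var i) = True"
| "wf_trm L (Cst c) = (c \<in> lconsts L)"

fun wf_fm :: "('c, 'r) lang \<Rightarrow> ('c, 'r) fm \<Rightarrow> bool" where
  "wf_fm L (Eq s t) = (wf_trm L s \<and> wf_trm L t)"
| "wf_fm L (Rel r ts) = (r \<in> lrels L \<and> length ts = larity L r \<and> (\<forall>t \<in> set ts. wf_trm L t))"
| "wf_fm L (Neg \<phi>) = wf_fm L \<phi>"
| "wf_fm L (Conj \<phi> \<psi>) = (wf_fm L \<phi> \<and> wf_fm L \<psi>)"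
| "wf_fm L (Ex x \<phi>) = wf_fm L \<phi>"

fun tval :: "('a, 'c, 'r) struc \<Rightarrow> (nat \<Rightarrow> 'a) \<Rightarrow> 'c trm \<Rightarrow> 'a" where
  "tval M e (Var i) = e i"
| "tval M e (Cst c) = cint M c"

fun sat :: "('a, 'c, 'r) struc \<Rightarrow> (nat \<Rightarrow> 'a) \<Rightarrow> ('c, 'r) fm \<Rightarrow> bool" where
  "sat M e (Eq s t) = (tval M e s = tval M e t)"
| "sat M e (Rel r ts) = rint M r (map (tval M e) ts)"
| "sat M e (Neg \<phi>) = (\<not> sat M e \<phi>)"
| "sat M e (Conj \<phi> \<psi>) = (sat M e \<phi> \<and> sat M e \<psi>)"
| "sat M e (Ex x \<phi>) = (\<exists>a \<in> univ M. sat M (e(x := a)) \<phi>)"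

definition tuples :: "nat \<Rightarrow> 'a set \<Rightarrow> 'a list set" where
  "tuples n A = {xs. length xs = n \<and> set xs \<subseteq> A}"

text \<open>Definable (with parameters) subsets of M^n: variables 0..n-1 are the tuple,
  the remaining variables are assigned parameters from the universe.\<close>
definition definable :: "('c, 'r) lang \<Rightarrow> ('a, 'c, 'r) struc \<Rightarrow> nat \<Rightarrow> 'a list set \<Rightarrow> bool" where
  "definable L M n S \<longleftrightarrow> (\<exists>\<phi> p. wf_fm L \<phi> \<and> (\<forall>i. p i \<in> univ M) \<and>
     S = {xs \<in> tuples n (univ M). sat M (\<lambda>i. if i < n then xs ! i else p i) \<phi>})"

definition star :: "'a list set \<Rightarrow> 'b list set \<Rightarrow> ('a \<times> 'b) list set" where
  "star A B = {zs. map fst zs \<in> A \<and> map snd zs \<in> B}"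

inductive_set bool_comb :: "'a set \<Rightarrow> 'a set set \<Rightarrow> 'a set set" for U F where
  base: "S \<in> F \<Longrightarrow> S \<in> bool_comb U F"
| top: "U \<in> bool_comb U F"
| compl: "S \<in> bool_comb U F \<Longrightarrow> U - S \<in> bool_comb U F"
| inter: "S \<in> bool_comb U F \<Longrightarrow> T \<in> bool_comb U F \<Longrightarrow> S \<inter> T \<in> bool_comb U F"

definition simple_gens ::
  "('c1, 'r1) lang \<Rightarrow> ('a1, 'c1, 'r1) struc \<Rightarrow> ('c2, 'r2) lang \<Rightarrow> ('a2, 'c2, 'r2) struc
   \<Rightarrow> nat \<Rightarrow> ('a1 \<times> 'a2) list set set" where
  "simple_gens L1 M1 L2 M2 n =
     {star A (tuples n (univ M2)) | A. definable L1 M1 n A}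
   \<union> {star (tuples n (univ M1)) B | B. definable L2 M2 n B}"

definition is_simple_product ::
  "('c, 'r) lang \<Rightarrow> ('a1 \<times> 'a2, 'c, 'r) struc \<Rightarrow>
   ('c1, 'r1) lang \<Rightarrow> ('a1, 'c1, 'r1) struc \<Rightarrow> ('c2, 'r2) lang \<Rightarrow> ('a2, 'c2, 'r2) struc \<Rightarrow> bool" where
  "is_simple_product L N L1 M1 L2 M2 \<longleftrightarrow>
     univ N = univ M1 \<times> univ M2 \<and>
     (\<forall>n S. definable L N n S \<longrightarrow>
        (\<exists>F. finite F \<and> F \<subseteq> simple_gens L1 M1 L2 M2 n \<and>
             S \<in> bool_comb (tuples n (univ N)) F))"

text \<open>Predicate symbols of L_sim: those of L1, those of L2 (kept disjoint by tagging), and two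
  binary predicates for the equivalence relations.\<close>
datatype ('r1, 'r2) simrel = R1 'r1 | R2 'r2 | Sim1 | Sim2

definition L_sim :: "('c1, 'r1) lang \<Rightarrow> ('c2, 'r2) lang \<Rightarrow> ('c1 \<times> 'c2, ('r1, 'r2) simrel) lang" where
  "L_sim L1 L2 = \<lparr> lconsts = lconsts L1 \<times> lconsts L2,
     lrels = R1 ` lrels L1 \<union> R2 ` lrels L2 \<union> {Sim1, Sim2},
     larity = (\<lambda>r. case r of R1 r1 \<Rightarrow> larity L1 r1 | R2 r2 \<Rightarrow> larity L2 r2 | Sim1 \<Rightarrow> 2 | Sim2 \<Rightarrow> 2) \<rparr>"

definition std_simple_product ::
  "('a1, 'c1, 'r1) struc \<Rightarrow> ('a2, 'c2, 'r2) struc \<Rightarrow> ('a1 \<times> 'a2, 'c1 \<times> 'c2, ('r1, 'r2) simrel) struc" where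
  "std_simple_product M1 M2 = \<lparr> univ = univ M1 \<times> univ M2,
     cint = (\<lambda>(c1, c2). (cint M1 c1, cint M2 c2)),
     rint = (\<lambda>r xs. set xs \<subseteq> univ M1 \<times> univ M2 \<and>
       (case r of
          R1 r1 \<Rightarrow> rint M1 r1 (map fst xs)
        | R2 r2 \<Rightarrow> rint M2 r2 (map snd xs)
        | Sim1 \<Rightarrow> length xs = 2 \<and> fst (xs ! 0) = fst (xs ! 1)
        | Sim2 \<Rightarrow> length xs = 2 \<and> snd (xs ! 0) = snd (xs ! 1))) \<rparr>"

end

theory Submission
  imports Defs
begin

definition ev :: "('a1, 'c1, 'r1) struc \<Rightarrow> ('a2, 'c2, 'r2) struc \<Rightarrow>
   (('c1, 'r1) fm \<times> ('c2, 'r2) fm) list \<Rightarrow> (nat \<Rightarrow> 'a1) \<Rightarrow> (nat \<Rightarrow> 'a2) \<Rightarrow> bool" where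
  "ev M1 M2 D e1 e2 \<longleftrightarrow> (\<exists>x\<in>set D. sat M1 e1 (fst x) \<and> sat M2 e2 (snd x))"

definition wfD :: "('c1, 'r1) lang \<Rightarrow> ('c2, 'r2) lang \<Rightarrow> (('c1, 'r1) fm \<times> ('c2, 'r2) fm) list \<Rightarrow> bool" where
  "wfD L1 L2 D \<longleftrightarrow> (\<forall>x\<in>set D. wf_fm L1 (fst x) \<and> wf_fm L2 (snd x))"

lemma ev_concat: "ev M1 M2 (concat (map f D)) e1 e2 \<longleftrightarrow> (\<exists>x\<in>set D. ev M1 M2 (f x) e1 e2)"
  by (auto simp: ev_def)

lemma neg_nf:
  assumes "wfD L1 L2 D"
  shows "\<exists>D'. wfD L1 L2 D' \<and> (\<forall>e1 e2. ev M1 M2 D' e1 e2 \<longleftrightarrow> \<not> ev M1 M2 D e1 e2)"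
  using assms
proof (induction D)
  case Nil
  show ?case
    by (rule exI[of _ "[(Eq (Var 0) (Var 0), Eq (Var 0) (Var 0))]"]) (simp add: ev_def wfD_def)
next
  case (Cons p D)
  obtain a b where p: "p = (a,b)" by force
  from Cons.prems have wa: "wf_fm L1 a" "wf_fm L2 b" and wD: "wfD L1 L2 D"
    by (auto simp: wfD_def p)
  from Cons.IH[OF wD] obtain D' where D': "wfD L1 L2 D'"
    "\<forall>e1 e2. ev M1 M2 D' e1 e2 \<longleftrightarrow> \<not> ev M1 M2 D e1 e2" by blast
  let ?D = "concat (map (\<lambda>x. [(Conj (Neg a) (fst x), snd x), (fst x, Conj (Neg b) (snd x))]) D')"
  show ?case
  proof (rule exI[of _ ?D], intro conjI allI)
    show "wfD L1 L2 ?D" using D'(1) wa by (fastforce simp: wfD_def)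
  next
    fix e1 e2
    have "ev M1 M2 ?D e1 e2 \<longleftrightarrow> ((\<not> sat M1 e1 a \<or> \<not> sat M2 e2 b) \<and> ev M1 M2 D' e1 e2)"
      unfolding ev_concat by (auto simp: ev_def)
    also have "\<dots> \<longleftrightarrow> \<not> ev M1 M2 (p # D) e1 e2"
      using D'(2) unfolding ev_def p by auto
    finally show "ev M1 M2 ?D e1 e2 \<longleftrightarrow> \<not> ev M1 M2 (p # D) e1 e2" .
  qed
qed

fun tr1 :: "('c1 \<times> 'c2) trm \<Rightarrow> 'c1 trm" where
  "tr1 (Var i) = Var i"
| "tr1 (Cst c) = Cst (fst c)"

fun tr2 :: "('c1 \<times> 'c2) trm \<Rightarrow> 'c2 trm" where
  "tr2 (Var i) = Var i"
| "tr2 (Cst c) = Cst (snd c)"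

lemma tr1_val: "tval M1 (fst \<circ> e) (tr1 t) = fst (tval (std_simple_product M1 M2) e t)"
  by (cases t) (auto simp: std_simple_product_def split: prod.splits)

lemma tr2_val: "tval M2 (snd \<circ> e) (tr2 t) = snd (tval (std_simple_product M1 M2) e t)"
  by (cases t) (auto simp: std_simple_product_def split: prod.splits)

lemma tr1_wf: "wf_trm (L_sim L1 L2) t \<Longrightarrow> wf_trm L1 (tr1 t)"
  by (cases t) (auto simp: L_sim_def)

lemma tr2_wf: "wf_trm (L_sim L1 L2) t \<Longrightarrow> wf_trm L2 (tr2 t)"
  by (cases t) (auto simp: L_sim_def)

lemma tval_in:
  assumes "is_structure L1 M1" "is_structure L2 M2" "wf_trm (L_sim L1 L2) t"
    "\<forall>i. e i \<in> univ M1 \<times> univ M2"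
  shows "tval (std_simple_product M1 M2) e t \<in> univ M1 \<times> univ M2"
  using assms
  by (cases t) (auto simp: std_simple_product_def L_sim_def is_structure_def split: prod.splits)

lemma rint_N:
  "rint (std_simple_product M1 M2) (R1 r1) xs = (set xs \<subseteq> univ M1 \<times> univ M2 \<and> rint M1 r1 (map fst xs))"
  "rint (std_simple_product M1 M2) (R2 r2) xs = (set xs \<subseteq> univ M1 \<times> univ M2 \<and> rint M2 r2 (map snd xs))"
  "rint (std_simple_product M1 M2) Sim1 xs = (set xs \<subseteq> univ M1 \<times> univ M2 \<and> length xs = 2 \<and> fst (xs ! 0) = fst (xs ! 1))"
  "rint (std_simple_product M1 M2) Sim2 xs = (set xs \<subseteq> univ M1 \<times> univ M2 \<and> length xs = 2 \<and> snd (xs ! 0) = snd (xs ! 1))"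
  by (simp_all add: std_simple_product_def)

lemma main_nf:
  fixes L1 :: "('c1, 'r1) lang" and M1 :: "('a1, 'c1, 'r1) struc"
    and L2 :: "('c2, 'r2) lang" and M2 :: "('a2, 'c2, 'r2) struc"
  assumes s1: "is_structure L1 M1" and s2: "is_structure L2 M2"
  shows "wf_fm (L_sim L1 L2) \<phi> \<Longrightarrow> \<exists>D. wfD L1 L2 D \<and>
    (\<forall>e. (\<forall>i. e i \<in> univ M1 \<times> univ M2) \<longrightarrow>
      (sat (std_simple_product M1 M2) e \<phi> \<longleftrightarrow> ev M1 M2 D (fst \<circ> e) (snd \<circ> e)))"
proof (induction \<phi>)
  case (Eq s t)
  show ?case
  proof (rule exI[of _ "[(Eq (tr1 s) (tr1 t), Eq (tr2 s) (tr2 t))]"], intro conjI allI impI)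
    show "wfD L1 L2 [(Eq (tr1 s) (tr1 t), Eq (tr2 s) (tr2 t))]"
      using Eq by (auto simp: wfD_def tr1_wf tr2_wf)
  next
    fix e :: "nat \<Rightarrow> 'a1 \<times> 'a2"
    show "sat (std_simple_product M1 M2) e (fm.Eq s t) =
         ev M1 M2 [(fm.Eq (tr1 s) (tr1 t), fm.Eq (tr2 s) (tr2 t))] (fst \<circ> e) (snd \<circ> e)"
      by (simp add: ev_def tr1_val[of M1 e _ M2] tr2_val[of M2 e _ M1] prod_eq_iff)
  qed
next
  case (Rel r ts)
  let ?N = "std_simple_product M1 M2"
  let ?T1 = "Eq (Var 0) (Var 0) :: ('c1, 'r1) fm"
  let ?T2 = "Eq (Var 0) (Var 0) :: ('c2, 'r2) fm"
  have tsw: "\<forall>t\<in>set ts. wf_trm (L_sim L1 L2) t" using Rel by simp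
  have inU: "\<And>e. \<forall>i. e i \<in> univ M1 \<times> univ M2 \<Longrightarrow> set (map (tval ?N e) ts) \<subseteq> univ M1 \<times> univ M2"
    by (simp only: set_map image_subset_iff) (use tval_in[OF s1 s2] tsw in blast)
  have m1: "\<And>e. map fst (map (tval ?N e) ts) = map (tval M1 (fst \<circ> e)) (map tr1 ts)"
    by (simp add: tr1_val[of M1 _ _ M2])
  have m2: "\<And>e. map snd (map (tval ?N e) ts) = map (tval M2 (snd \<circ> e)) (map tr2 ts)"
    by (simp add: tr2_val[of M2 _ _ M1])
  show ?case
  proof (cases r)
    case (R1 r1)
    show ?thesis
    proof (rule exI[of _ "[(Rel r1 (map tr1 ts), ?T2)]"], intro conjI allI impI)
      show "wfD L1 L2 [(Rel r1 (map tr1 ts), ?T2)]"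
        using Rel tsw by (auto simp: wfD_def tr1_wf R1 L_sim_def)
    next
      fix e :: "nat \<Rightarrow> 'a1 \<times> 'a2"
      assume a: "\<forall>i. e i \<in> univ M1 \<times> univ M2"
      have "sat ?N e (Rel r ts) \<longleftrightarrow> rint M1 r1 (map fst (map (tval ?N e) ts))"
        using inU[OF a] by (simp only: R1 sat.simps rint_N simp_thms)
      also have "\<dots> \<longleftrightarrow> sat M1 (fst \<circ> e) (Rel r1 (map tr1 ts))" by (simp only: m1 sat.simps)
      finally show "sat ?N e (Rel r ts) = ev M1 M2 [(Rel r1 (map tr1 ts), ?T2)] (fst \<circ> e) (snd \<circ> e)"
        by (simp add: ev_def)
    qed
  next
    case (R2 r2)
    show ?thesis
    proof (rule exI[of _ "[(?T1, Rel r2 (map tr2 ts))]"], intro conjI allI impI)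
      show "wfD L1 L2 [(?T1, Rel r2 (map tr2 ts))]"
        using Rel tsw by (auto simp: wfD_def tr2_wf R2 L_sim_def)
    next
      fix e :: "nat \<Rightarrow> 'a1 \<times> 'a2"
      assume a: "\<forall>i. e i \<in> univ M1 \<times> univ M2"
      have "sat ?N e (Rel r ts) \<longleftrightarrow> rint M2 r2 (map snd (map (tval ?N e) ts))"
        using inU[OF a] by (simp only: R2 sat.simps rint_N simp_thms)
      also have "\<dots> \<longleftrightarrow> sat M2 (snd \<circ> e) (Rel r2 (map tr2 ts))" by (simp only: m2 sat.simps)
      finally show "sat ?N e (Rel r ts) = ev M1 M2 [(?T1, Rel r2 (map tr2 ts))] (fst \<circ> e) (snd \<circ> e)"
        by (simp add: ev_def)
    qed
  next
    case Sim1
    have l: "length ts = 2" using Rel by (simp add: Sim1 L_sim_def)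
    have w: "wf_trm (L_sim L1 L2) (ts!0)" "wf_trm (L_sim L1 L2) (ts!1)" using tsw l by auto
    show ?thesis
    proof (rule exI[of _ "[(Eq (tr1 (ts!0)) (tr1 (ts!1)), ?T2)]"], intro conjI allI impI)
      show "wfD L1 L2 [(Eq (tr1 (ts!0)) (tr1 (ts!1)), ?T2)]"
        using w by (auto simp: wfD_def tr1_wf)
    next
      fix e :: "nat \<Rightarrow> 'a1 \<times> 'a2"
      assume a: "\<forall>i. e i \<in> univ M1 \<times> univ M2"
      have "sat ?N e (Rel r ts) \<longleftrightarrow> fst (tval ?N e (ts!0)) = fst (tval ?N e (ts!1))"
        using inU[OF a] l by (simp add: Sim1 rint_N del: map_map)
      also have "\<dots> \<longleftrightarrow> sat M1 (fst \<circ> e) (Eq (tr1 (ts!0)) (tr1 (ts!1)))"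
        by (simp only: tr1_val[of M1 e _ M2] sat.simps)
      finally show "sat ?N e (Rel r ts) = ev M1 M2 [(Eq (tr1 (ts!0)) (tr1 (ts!1)), ?T2)] (fst \<circ> e) (snd \<circ> e)"
        by (simp add: ev_def)
    qed
  next
    case Sim2
    have l: "length ts = 2" using Rel by (simp add: Sim2 L_sim_def)
    have w: "wf_trm (L_sim L1 L2) (ts!0)" "wf_trm (L_sim L1 L2) (ts!1)" using tsw l by auto
    show ?thesis
    proof (rule exI[of _ "[(?T1, Eq (tr2 (ts!0)) (tr2 (ts!1)))]"], intro conjI allI impI)
      show "wfD L1 L2 [(?T1, Eq (tr2 (ts!0)) (tr2 (ts!1)))]"
        using w by (auto simp: wfD_def tr2_wf)
    next
      fix e :: "nat \<Rightarrow> 'a1 \<times> 'a2"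
      assume a: "\<forall>i. e i \<in> univ M1 \<times> univ M2"
      have "sat ?N e (Rel r ts) \<longleftrightarrow> snd (tval ?N e (ts!0)) = snd (tval ?N e (ts!1))"
        using inU[OF a] l by (simp add: Sim2 rint_N del: map_map)
      also have "\<dots> \<longleftrightarrow> sat M2 (snd \<circ> e) (Eq (tr2 (ts!0)) (tr2 (ts!1)))"
        by (simp only: tr2_val[of M2 e _ M1] sat.simps)
      finally show "sat ?N e (Rel r ts) = ev M1 M2 [(?T1, Eq (tr2 (ts!0)) (tr2 (ts!1)))] (fst \<circ> e) (snd \<circ> e)"
        by (simp add: ev_def)
    qed
  qed
next
  case (Neg \<phi>)
  have "wf_fm (L_sim L1 L2) \<phi>" using Neg.prems by simp
  then obtain D where D: "wfD L1 L2 D" "\<forall>e. (\<forall>i. e i \<in> univ M1 \<times> univ M2) \<longrightarrow>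
      (sat (std_simple_product M1 M2) e \<phi> \<longleftrightarrow> ev M1 M2 D (fst \<circ> e) (snd \<circ> e))" using Neg.IH by blast
  obtain D' where "wfD L1 L2 D'" "\<forall>e1 e2. ev M1 M2 D' e1 e2 \<longleftrightarrow> \<not> ev M1 M2 D e1 e2"
    using neg_nf[OF D(1)] by blast
  then show ?case using D(2) by (intro exI[of _ D']) (simp add: comp_def)
next
  case (Conj \<phi> \<psi>)
  have "wf_fm (L_sim L1 L2) \<phi>" using Conj.prems by simp
  then obtain D where D: "wfD L1 L2 D" "\<forall>e. (\<forall>i. e i \<in> univ M1 \<times> univ M2) \<longrightarrow>
      (sat (std_simple_product M1 M2) e \<phi> \<longleftrightarrow> ev M1 M2 D (fst \<circ> e) (snd \<circ> e))" using Conj.IH by blast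
  have "wf_fm (L_sim L1 L2) \<psi>" using Conj.prems by simp
  then obtain E where E: "wfD L1 L2 E" "\<forall>e. (\<forall>i. e i \<in> univ M1 \<times> univ M2) \<longrightarrow>
      (sat (std_simple_product M1 M2) e \<psi> \<longleftrightarrow> ev M1 M2 E (fst \<circ> e) (snd \<circ> e))" using Conj.IH by blast
  let ?D = "concat (map (\<lambda>x. map (\<lambda>y. (Conj (fst x) (fst y), Conj (snd x) (snd y))) E) D)"
  show ?case
  proof (rule exI[of _ ?D], intro conjI allI impI)
    show "wfD L1 L2 ?D" using D(1) E(1) by (fastforce simp: wfD_def)
  next
    fix e :: "nat \<Rightarrow> 'a1 \<times> 'a2"
    assume "\<forall>i. e i \<in> univ M1 \<times> univ M2"
    moreover have "ev M1 M2 ?D e1 e2 \<longleftrightarrow> ev M1 M2 D e1 e2 \<and> ev M1 M2 E e1 e2" for e1 e2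
      unfolding ev_concat by (auto simp: ev_def)
    ultimately show "sat (std_simple_product M1 M2) e (Conj \<phi> \<psi>) = ev M1 M2 ?D (fst \<circ> e) (snd \<circ> e)"
      using D(2) E(2) by simp
  qed
next
  case (Ex x \<phi>)
  have "wf_fm (L_sim L1 L2) \<phi>" using Ex.prems by simp
  then obtain D where D: "wfD L1 L2 D" "\<forall>e. (\<forall>i. e i \<in> univ M1 \<times> univ M2) \<longrightarrow>
      (sat (std_simple_product M1 M2) e \<phi> \<longleftrightarrow> ev M1 M2 D (fst \<circ> e) (snd \<circ> e))" using Ex.IH by blast
  let ?D = "map (\<lambda>y. (Ex x (fst y), Ex x (snd y))) D"
  show ?case
  proof (rule exI[of _ ?D], intro conjI allI impI)
    show "wfD L1 L2 ?D" using D(1) by (fastforce simp: wfD_def)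
  next
    fix e :: "nat \<Rightarrow> 'a1 \<times> 'a2"
    assume e: "\<forall>i. e i \<in> univ M1 \<times> univ M2"
    have "sat (std_simple_product M1 M2) e (Ex x \<phi>) \<longleftrightarrow>
       (\<exists>a\<in>univ M1. \<exists>b\<in>univ M2. ev M1 M2 D (fst \<circ> e(x := (a,b))) (snd \<circ> e(x := (a,b))))"
    proof -
      have "\<And>a b. a \<in> univ M1 \<Longrightarrow> b \<in> univ M2 \<Longrightarrow> \<forall>i. (e(x := (a,b))) i \<in> univ M1 \<times> univ M2"
        using e by auto
      then show ?thesis using D(2) by (auto simp: std_simple_product_def)
    qed
    also have "\<dots> \<longleftrightarrow> (\<exists>a\<in>univ M1. \<exists>b\<in>univ M2. ev M1 M2 D ((fst \<circ> e)(x := a)) ((snd \<circ> e)(x := b)))"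
    proof -
      have "\<And>a b. fst \<circ> e(x := (a,b)) = (fst \<circ> e)(x := a)" "\<And>a b. snd \<circ> e(x := (a,b)) = (snd \<circ> e)(x := b)"
        by auto
      then show ?thesis by simp
    qed
    also have "\<dots> \<longleftrightarrow> ev M1 M2 ?D (fst \<circ> e) (snd \<circ> e)"
      unfolding ev_def by (simp; blast)
    finally show "sat (std_simple_product M1 M2) e (Ex x \<phi>) = ev M1 M2 ?D (fst \<circ> e) (snd \<circ> e)" .
  qed
qed

lemma bool_comb_Union:
  assumes "\<forall>X\<in>set Xs. X \<in> bool_comb U F \<and> X \<subseteq> U"
  shows "\<Union>(set Xs) \<in> bool_comb U F"
  using assms
proof (induction Xs)
  case Nil
  have "U - U \<in> bool_comb U F" by (intro bool_comb.compl bool_comb.top)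
  then show ?case by simp
next
  case (Cons X Xs)
  have Y: "\<Union>(set Xs) \<in> bool_comb U F" "\<Union>(set Xs) \<subseteq> U" using Cons by auto
  have X: "X \<in> bool_comb U F" "X \<subseteq> U" using Cons.prems by auto
  have "U - ((U - X) \<inter> (U - \<Union>(set Xs))) \<in> bool_comb U F"
    by (intro bool_comb.compl bool_comb.inter X Y)
  moreover have "U - ((U - X) \<inter> (U - \<Union>(set Xs))) = X \<union> \<Union>(set Xs)" using X Y by blast
  ultimately show ?case by simp
qed

lemma tuples_prod: "zs \<in> tuples n (A \<times> B) \<longleftrightarrow> map fst zs \<in> tuples n A \<and> map snd zs \<in> tuples n B"
  by (auto simp: tuples_def)

theorem corollary2p10:
  fixes L1 :: "('c1, 'r1) lang" and M1 :: "('a1, 'c1, 'r1) struc"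
    and L2 :: "('c2, 'r2) lang" and M2 :: "('a2, 'c2, 'r2) struc"
  assumes "is_structure L1 M1" and "is_structure L2 M2"
  shows "is_simple_product (L_sim L1 L2) (std_simple_product M1 M2) L1 M1 L2 M2"
  unfolding is_simple_product_def
proof (intro conjI allI impI)
  let ?N = "std_simple_product M1 M2"
  show "univ ?N = univ M1 \<times> univ M2" by (simp add: std_simple_product_def)
  fix n S
  assume "definable (L_sim L1 L2) ?N n S"
  then obtain \<phi> p where wf: "wf_fm (L_sim L1 L2) \<phi>" and p: "\<forall>i. p i \<in> univ M1 \<times> univ M2"
    and S: "S = {xs \<in> tuples n (univ M1 \<times> univ M2). sat ?N (\<lambda>i. if i < n then xs ! i else p i) \<phi>}"
    unfolding definable_def by (auto simp: std_simple_product_def)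
  obtain D where D: "wfD L1 L2 D" "\<forall>e. (\<forall>i. e i \<in> univ M1 \<times> univ M2) \<longrightarrow>
      (sat ?N e \<phi> \<longleftrightarrow> ev M1 M2 D (fst \<circ> e) (snd \<circ> e))"
    using main_nf[OF assms wf] by blast
  define A where "A a = {ys \<in> tuples n (univ M1). sat M1 (\<lambda>i. if i < n then ys ! i else fst (p i)) a}" for a
  define B where "B b = {ys \<in> tuples n (univ M2). sat M2 (\<lambda>i. if i < n then ys ! i else snd (p i)) b}" for b
  define G1 where "G1 = (\<lambda>x. star (A (fst x)) (tuples n (univ M2))) ` set D"
  define G2 where "G2 = (\<lambda>x. star (tuples n (univ M1)) (B (snd x))) ` set D"
  let ?U = "tuples n (univ ?N)"
  have UN: "univ ?N = univ M1 \<times> univ M2" by (simp add: std_simple_product_def)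
  show "\<exists>F. finite F \<and> F \<subseteq> simple_gens L1 M1 L2 M2 n \<and> S \<in> bool_comb ?U F"
  proof (intro exI conjI)
    show "finite (G1 \<union> G2)" by (simp add: G1_def G2_def)
    show "G1 \<union> G2 \<subseteq> simple_gens L1 M1 L2 M2 n"
    proof -
      have pa: "\<forall>i. fst (p i) \<in> univ M1" "\<forall>i. snd (p i) \<in> univ M2" using p by (auto simp: mem_Times_iff)
      have "definable L1 M1 n (A a)" if "wf_fm L1 a" for a
        unfolding definable_def A_def using that pa by (intro exI[of _ a] exI[of _ "\<lambda>i. fst (p i)"]) auto
      moreover have "definable L2 M2 n (B b)" if "wf_fm L2 b" for b
        unfolding definable_def B_def using that pa by (intro exI[of _ b] exI[of _ "\<lambda>i. snd (p i)"]) auto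
      ultimately show ?thesis using D(1) unfolding G1_def G2_def simple_gens_def wfD_def by fastforce
    qed
    let ?Xs = "map (\<lambda>x. star (A (fst x)) (tuples n (univ M2)) \<inter> star (tuples n (univ M1)) (B (snd x))) D"
    have "S = \<Union>(set ?Xs)"
    proof (rule set_eqI)
      fix zs
      show "zs \<in> S \<longleftrightarrow> zs \<in> \<Union>(set ?Xs)"
      proof (cases "zs \<in> tuples n (univ M1 \<times> univ M2)")
        case False
        then show ?thesis unfolding S by (auto simp: star_def A_def B_def tuples_prod)
      next
        case True
        let ?e = "\<lambda>i. if i < n then zs ! i else p i"
        have ein: "\<forall>i. ?e i \<in> univ M1 \<times> univ M2"
          using True p by (auto simp: tuples_def)
        have len: "length zs = n" using True by (simp add: tuples_def)
        have f: "fst \<circ> ?e = (\<lambda>i. if i < n then map fst zs ! i else fst (p i))"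
          using len by auto
        have s: "snd \<circ> ?e = (\<lambda>i. if i < n then map snd zs ! i else snd (p i))"
          using len by auto
        have "zs \<in> S \<longleftrightarrow> ev M1 M2 D (fst \<circ> ?e) (snd \<circ> ?e)"
          using D(2) ein True unfolding S by auto
        also have "\<dots> \<longleftrightarrow> zs \<in> \<Union>(set ?Xs)"
          using True unfolding f s ev_def by (auto simp: star_def A_def B_def tuples_prod)
        finally show ?thesis .
      qed
    qed
    moreover have "\<Union>(set ?Xs) \<in> bool_comb ?U (G1 \<union> G2)"
    proof (rule bool_comb_Union, intro ballI conjI)
      fix X assume "X \<in> set ?Xs"
      then obtain y where ab: "y \<in> set D"
        and X: "X = star (A (fst y)) (tuples n (univ M2)) \<inter> star (tuples n (univ M1)) (B (snd y))" by auto
      have "star (A (fst y)) (tuples n (univ M2)) \<in> G1" "star (tuples n (univ M1)) (B (snd y)) \<in> G2"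
        using ab unfolding G1_def G2_def by blast+
      then show "X \<in> bool_comb ?U (G1 \<union> G2)" unfolding X
        by (intro bool_comb.inter bool_comb.base) auto
      show "X \<subseteq> ?U" unfolding X UN by (auto simp: star_def A_def B_def tuples_prod)
    qed
    ultimately show "S \<in> bool_comb ?U (G1 \<union> G2)" by simp
  qed
qed

end
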